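(* Let $\Pi$ be a positive semidefinite operator on $(\mathbb{C}^2)^{\otimes n}$ with $\Pi\le\mathbb{1}$ (a POVM element) that has at least one nonzero off-diagonal entry with respect to the computational basis. Then there exist phases $\theta_{\bm{y}}\in[0,2\pi]$, $\bm{y}\in\{0,1\}^n$, such that for $|\psi\rangle=\frac{1}{\sqrt{2^n}}\sum_{\bm{y}}e^{i\theta_{\bm{y}}}|\bm{y}\rangle$ and $W_\psi=\frac{1}{2^n}\mathbb{1}-|\psi\rangle\langle\psi|$ one has $\operatorname{tr}[W_\psi\Pi]\neq 0$.
   Context: $\{|\bm{y}\rangle:\bm{y}\in\{0,1\}^n\}$ is the computational basis of the $n$-qubit space. $W_\psi$ is called the $\psi$-induced quantum noise witness, and it "detects" $\Pi$ when $\operatorname{tr}[W_\psi\Pi]\ne0$. *)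

theory Defs
  imports "HOL-Analysis.Analysis"
begin

text \<open>Operators on the n-qubit space: complex matrices indexed by the computational
  basis {0,1}^n, modelled as the finite type 'n \<Rightarrow> bool with n = CARD('n).\<close>

definition quad_form :: "complex^'m^'m \<Rightarrow> complex^'m \<Rightarrow> complex" where
  "quad_form A v = (\<Sum>i\<in>UNIV. \<Sum>j\<in>UNIV. cnj (v $ i) * (A $ i $ j) * v $ j)"

definition psd :: "complex^'m^'m \<Rightarrow> bool" where
  "psd A \<longleftrightarrow> (\<forall>v. Im (quad_form A v) = 0 \<and> Re (quad_form A v) \<ge> 0)"

definition phase_state :: "(('n::finite \<Rightarrow> bool) \<Rightarrow> real) \<Rightarrow> complex^('n \<Rightarrow> bool)" where
  "phase_state \<theta> = (\<chi> y. complex_of_real (1 / sqrt (2 ^ CARD('n))) * exp (\<i> * complex_of_real (\<theta> y)))"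

definition ketbra :: "complex^'m \<Rightarrow> complex^'m^'m" where
  "ketbra \<psi> = (\<chi> i j. \<psi> $ i * cnj (\<psi> $ j))"

definition witness :: "(('n::finite \<Rightarrow> bool) \<Rightarrow> real) \<Rightarrow> complex^('n \<Rightarrow> bool)^('n \<Rightarrow> bool)" where
  "witness \<theta> = mat (complex_of_real (1 / 2 ^ CARD('n))) - ketbra (phase_state \<theta>)"

end

theory Submission
  imports Defs
begin

lemma fourier:
  fixes k0 a1 a2 a3 a4 p q :: complex
  defines "h \<equiv> \<lambda>u v. k0 + cnj u * a1 + u * a2 + cnj v * a3 + v * a4 + cnj u * v * p + cnj v * u * q"
  assumes "\<And>u v. u \<in> {1,\<i>,-1,-\<i>} \<Longrightarrow> v \<in> {1,\<i>,-1,-\<i>} \<Longrightarrow> h u v = 0"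
  shows "p = 0"
proof -
  have "(\<Sum>u\<in>{1,\<i>,-1,-\<i>}. \<Sum>v\<in>{1,\<i>,-1,-\<i>}. h u v * u * cnj v) = 0"
    using assms(2) by simp
  moreover have "(\<Sum>u\<in>{1,\<i>,-1,-\<i>}. \<Sum>v\<in>{1,\<i>,-1,-\<i>}. h u v * u * cnj v) = 16 * p"
    unfolding h_def by (simp add: algebra_simps complex_eq_iff)
  ultimately show ?thesis by simp
qed

lemma sum_two_out:
  fixes f :: "'a::finite \<Rightarrow> 'b::comm_monoid_add"
  assumes "a \<noteq> b"
  shows "sum f UNIV = f a + f b + sum f (UNIV - {a,b})"
proof -
  have "sum f UNIV = f a + sum f (UNIV - {a})" by (simp add: sum.remove)
  moreover have "sum f (UNIV - {a}) = f b + sum f (UNIV - {a} - {b})"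
    using assms by (intro sum.remove) auto
  moreover have "UNIV - {a} - {b} = UNIV - {a,b}" by auto
  ultimately show ?thesis by (simp add: add.assoc)
qed

lemma expand:
  fixes P :: "complex^'m::finite^'m" and u v :: complex
  assumes ne: "y0 \<noteq> z0"
  defines "E \<equiv> \<lambda>y. if y = y0 then u else if y = z0 then v else 1"
  defines "R \<equiv> UNIV - {y0, z0}"
  shows "(\<Sum>k\<in>UNIV. \<Sum>i\<in>UNIV. cnj (E k) * E i * P$k$i) =
    cnj u * u * P$y0$y0 + cnj u * v * P$y0$z0 + cnj u * (\<Sum>i\<in>R. P$y0$i)
  + cnj v * u * P$z0$y0 + cnj v * v * P$z0$z0 + cnj v * (\<Sum>i\<in>R. P$z0$i)
  + u * (\<Sum>k\<in>R. P$k$y0) + v * (\<Sum>k\<in>R. P$k$z0) + (\<Sum>k\<in>R. \<Sum>i\<in>R. P$k$i)"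
proof -
  have ER: "k \<in> R \<Longrightarrow> E k = 1" for k unfolding E_def R_def by auto
  have inner: "(\<Sum>i\<in>UNIV. cnj (E k) * E i * P$k$i) = cnj (E k) * (u * P$k$y0 + v * P$k$z0 + (\<Sum>i\<in>R. P$k$i))" for k
  proof -
    have "(\<Sum>i\<in>UNIV. cnj (E k) * E i * P$k$i) = cnj (E k) * (\<Sum>i\<in>UNIV. E i * P$k$i)"
      by (simp add: sum_distrib_left mult.assoc)
    also have "(\<Sum>i\<in>UNIV. E i * P$k$i) = E y0 * P$k$y0 + E z0 * P$k$z0 + (\<Sum>i\<in>R. E i * P$k$i)"
      unfolding R_def by (rule sum_two_out[OF ne])
    also have "(\<Sum>i\<in>R. E i * P$k$i) = (\<Sum>i\<in>R. P$k$i)"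
      by (rule sum.cong) (simp_all add: ER)
    finally show ?thesis using ne by (simp add: E_def)
  qed
  have "(\<Sum>k\<in>UNIV. \<Sum>i\<in>UNIV. cnj (E k) * E i * P$k$i)
     = (\<Sum>k\<in>UNIV. cnj (E k) * (u * P$k$y0 + v * P$k$z0 + (\<Sum>i\<in>R. P$k$i)))"
    by (simp only: inner)
  also have "\<dots> = cnj (E y0) * (u * P$y0$y0 + v * P$y0$z0 + (\<Sum>i\<in>R. P$y0$i))
     + cnj (E z0) * (u * P$z0$y0 + v * P$z0$z0 + (\<Sum>i\<in>R. P$z0$i))
     + (\<Sum>k\<in>R. cnj (E k) * (u * P$k$y0 + v * P$k$z0 + (\<Sum>i\<in>R. P$k$i)))"
    unfolding R_def by (rule sum_two_out[OF ne])
  also have "(\<Sum>k\<in>R. cnj (E k) * (u * P$k$y0 + v * P$k$z0 + (\<Sum>i\<in>R. P$k$i)))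
     = u * (\<Sum>k\<in>R. P$k$y0) + v * (\<Sum>k\<in>R. P$k$z0) + (\<Sum>k\<in>R. \<Sum>i\<in>R. P$k$i)"
    by (simp add: ER sum.distrib sum_distrib_left)
  finally show ?thesis using ne by (simp add: E_def algebra_simps)
qed

lemma units4: "u \<in> {1,\<i>,-1,-\<i>} \<Longrightarrow> \<exists>s\<in>{0, pi/2, pi, 3*pi/2}. exp (\<i> * complex_of_real s) = u"
proof -
  have a: "exp (\<i> * complex_of_real (pi/2)) = \<i>" by (metis cis_conv_exp cis_pi_half)
  have b: "exp (\<i> * complex_of_real pi) = -1" by (simp add: exp_Euler)
  have c: "exp (\<i> * complex_of_real (3*pi/2)) = -\<i>"
  proof -
    have "pi + pi/2 = 3*pi/2" by simp
    then have "cis (3*pi/2) = -\<i>" using cis_mult[of pi "pi/2"] by simp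
    then show ?thesis by (simp add: cis_conv_exp)
  qed
  assume "u \<in> {1,\<i>,-1,-\<i>}"
  then show ?thesis using a b c by fastforce
qed

lemma trace_eq:
  fixes P :: "complex^('n::finite \<Rightarrow> bool)^('n \<Rightarrow> bool)"
  shows "trace (witness \<theta> ** P) = complex_of_real (1 / 2 ^ CARD('n)) *
     ((\<Sum>i\<in>UNIV. P$i$i) - (\<Sum>k\<in>UNIV. \<Sum>i\<in>UNIV. cnj (exp (\<i> * complex_of_real (\<theta> k))) * exp (\<i> * complex_of_real (\<theta> i)) * P$k$i))"
proof -
  have r: "complex_of_real (1 / sqrt (2 ^ CARD('n))) * complex_of_real (1 / sqrt (2 ^ CARD('n))) = complex_of_real (1 / 2 ^ CARD('n))"
    by (simp flip: of_real_mult)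
  have "trace (witness \<theta> ** P) = (\<Sum>i\<in>UNIV. \<Sum>k\<in>UNIV. ((if i = k then complex_of_real (1 / 2 ^ CARD('n)) else 0)
      - complex_of_real (1 / sqrt (2 ^ CARD('n))) * exp (\<i> * complex_of_real (\<theta> i)) * cnj (complex_of_real (1 / sqrt (2 ^ CARD('n))) * exp (\<i> * complex_of_real (\<theta> k)))) * P$k$i)"
    unfolding trace_def matrix_matrix_mult_def witness_def ketbra_def phase_state_def mat_def
    by (simp only: vec_lambda_beta minus_vec_def mat_def)
  also have "\<dots> = (\<Sum>i\<in>UNIV. complex_of_real (1 / 2 ^ CARD('n)) * P$i$i) - (\<Sum>i\<in>UNIV. \<Sum>k\<in>UNIV. complex_of_real (1 / 2 ^ CARD('n)) * (cnj (exp (\<i> * complex_of_real (\<theta> k))) * exp (\<i> * complex_of_real (\<theta> i)) * P$k$i))"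
  proof -
    have pt: "((if i = k then complex_of_real (1 / 2 ^ CARD('n)) else 0)
      - complex_of_real (1 / sqrt (2 ^ CARD('n))) * exp (\<i> * complex_of_real (\<theta> i)) * cnj (complex_of_real (1 / sqrt (2 ^ CARD('n))) * exp (\<i> * complex_of_real (\<theta> k)))) * P$k$i
      = (if i = k then complex_of_real (1 / 2 ^ CARD('n)) * P$i$i else 0) - complex_of_real (1 / 2 ^ CARD('n)) * (cnj (exp (\<i> * complex_of_real (\<theta> k))) * exp (\<i> * complex_of_real (\<theta> i)) * P$k$i)" for i k
      apply (simp only: complex_cnj_mult complex_cnj_complex_of_real r[symmetric])
      by (cases "i = k") (simp_all add: algebra_simps)
    show ?thesis
      by (simp only: pt sum_subtractf) (simp only: sum.delta' finite UNIV_I if_True)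
  qed
  also have "\<dots> = complex_of_real (1 / 2 ^ CARD('n)) *
     ((\<Sum>i\<in>UNIV. P$i$i) - (\<Sum>k\<in>UNIV. \<Sum>i\<in>UNIV. cnj (exp (\<i> * complex_of_real (\<theta> k))) * exp (\<i> * complex_of_real (\<theta> i)) * P$k$i))"
    unfolding right_diff_distrib sum_distrib_left
    by (rule arg_cong[where f="\<lambda>x. _ - x"], rule sum.swap)
  finally show ?thesis .
qed


theorem proposition2:
  fixes P :: "complex^('n::finite \<Rightarrow> bool)^('n \<Rightarrow> bool)"
  assumes "psd P"
    and "psd (mat 1 - P)"
    and "\<exists>y z. y \<noteq> z \<and> P $ y $ z \<noteq> 0"
  shows "\<exists>\<theta> :: ('n \<Rightarrow> bool) \<Rightarrow> real. (\<forall>y. 0 \<le> \<theta> y \<and> \<theta> y \<le> 2 * pi) \<and>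
           trace (witness \<theta> ** P) \<noteq> 0"
proof (rule ccontr)
  assume H: "\<not> ?thesis"
  obtain y0 z0 where ne: "y0 \<noteq> z0" and nz: "P $ y0 $ z0 \<noteq> 0" using assms(3) by blast
  define R where "R = UNIV - {y0, z0}"
  define E where "E = (\<lambda>u v y. if y = y0 then u else if y = z0 then v else (1::complex))"
  have c0: "complex_of_real (1 / 2 ^ CARD('n)) \<noteq> 0" by simp
  have G0: "(\<Sum>i\<in>UNIV. P$i$i) - (\<Sum>k\<in>UNIV. \<Sum>i\<in>UNIV. cnj (E u v k) * E u v i * P$k$i) = 0"
    if u: "u \<in> {1,\<i>,-1,-\<i>}" and v: "v \<in> {1,\<i>,-1,-\<i>}" for u v
  proof -
    obtain s where s: "s \<in> {0, pi/2, pi, 3*pi/2}" "exp (\<i> * complex_of_real s) = u"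
      using units4[OF u] by blast
    obtain t where t: "t \<in> {0, pi/2, pi, 3*pi/2}" "exp (\<i> * complex_of_real t) = v"
      using units4[OF v] by blast
    define \<theta> where "\<theta> = (\<lambda>y. if y = y0 then s else if y = z0 then t else (0::real))"
    have rs: "0 \<le> s \<and> s \<le> 2 * pi" using s(1) pi_gt_zero by (auto simp del: pi_gt_zero)
    have rt: "0 \<le> t \<and> t \<le> 2 * pi" using t(1) pi_gt_zero by (auto simp del: pi_gt_zero)
    have rng: "\<forall>y. 0 \<le> \<theta> y \<and> \<theta> y \<le> 2 * pi"
      using rs rt pi_gt_zero unfolding \<theta>_def by auto
    with H have "trace (witness \<theta> ** P) = 0" by blast
    then have z: "(\<Sum>i\<in>UNIV. P$i$i) - (\<Sum>k\<in>UNIV. \<Sum>i\<in>UNIV. cnj (exp (\<i> * complex_of_real (\<theta> k))) * exp (\<i> * complex_of_real (\<theta> i)) * P$k$i) = 0"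
      using c0 by (simp only: trace_eq mult_eq_0_iff) blast
    have e: "exp (\<i> * complex_of_real (\<theta> y)) = E u v y" for y
      using s(2) t(2) unfolding \<theta>_def E_def by auto
    show ?thesis using z by (simp only: e)
  qed
  have cu: "u \<in> {1,\<i>,-1,-\<i>} \<Longrightarrow> cnj u * u = 1" for u by auto
  have "- P$y0$z0 = 0"
  proof (rule fourier[of "(\<Sum>i\<in>UNIV. P$i$i) - (P$y0$y0 + P$z0$z0 + (\<Sum>k\<in>R. \<Sum>i\<in>R. P$k$i))"
      "- (\<Sum>i\<in>R. P$y0$i)" "- (\<Sum>k\<in>R. P$k$y0)" "- (\<Sum>i\<in>R. P$z0$i)" "- (\<Sum>k\<in>R. P$k$z0)"
      "- P$y0$z0" "- P$z0$y0"])
    fix u v :: complex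
    assume u: "u \<in> {1,\<i>,-1,-\<i>}" and v: "v \<in> {1,\<i>,-1,-\<i>}"
    have "(\<Sum>i\<in>UNIV. P$i$i) - (\<Sum>k\<in>UNIV. \<Sum>i\<in>UNIV. cnj (E u v k) * E u v i * P$k$i) = 0"
      by (rule G0[OF u v])
    moreover have X: "(\<Sum>k\<in>UNIV. \<Sum>i\<in>UNIV. cnj (E u v k) * E u v i * P$k$i) =
       P$y0$y0 + P$z0$z0 + cnj u * v * P$y0$z0 + cnj v * u * P$z0$y0 + cnj u * (\<Sum>i\<in>R. P$y0$i)
       + cnj v * (\<Sum>i\<in>R. P$z0$i) + u * (\<Sum>k\<in>R. P$k$y0) + v * (\<Sum>k\<in>R. P$k$z0) + (\<Sum>k\<in>R. \<Sum>i\<in>R. P$k$i)"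
    proof -
      have cux: "cnj u * u * x = x" "cnj v * v * x = x" for x using cu[OF u] cu[OF v] by simp_all
      show ?thesis using expand[OF ne, where P=P and u=u and v=v]
        unfolding E_def R_def cux by (simp add: algebra_simps)
    qed
    ultimately show "(\<Sum>i\<in>UNIV. P$i$i) - (P$y0$y0 + P$z0$z0 + (\<Sum>k\<in>R. \<Sum>i\<in>R. P$k$i)) + cnj u * - (\<Sum>i\<in>R. P$y0$i) + u * - (\<Sum>k\<in>R. P$k$y0) +
          cnj v * - (\<Sum>i\<in>R. P$z0$i) + v * - (\<Sum>k\<in>R. P$k$z0) + cnj u * v * - P$y0$z0 + cnj v * u * - P$z0$y0 = 0"
      by (simp add: algebra_simps)
  qed
  with nz show False by simp
qed

end
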